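(* Let $(X,u)$ and $(Y,v)$ be Čech closure spaces, let $Y^X$ be the set of all continuous maps $(X,u)\to(Y,v)$, and let $\{\sigma_\alpha\}$ be a collection of Čech closure operators on $Y^X$. (1) If every $\sigma_\alpha$ is proper, then the infimum $\bigwedge\sigma_\alpha$ and the supremum $\bigvee\sigma_\alpha$ are proper. (2) If every $\sigma_\alpha$ is admissible, then the supremum $\bigvee\sigma_\alpha$ is admissible.
   Context: A Čech closure space $(X,u)$ is a set $X$ with an operator $u:\mathcal P(X)\to\mathcal P(X)$ satisfying $u(\emptyset)=\emptyset$, $A\subset u(A)$, and $u(A\cup B)=u(A)\cup u(B)$. The interior is $\mathrm{int}_u A=X\setminus u(X\setminus A)$; $U$ is a neighbourhood of $x$ if $x\in\mathrm{int}_uU$; $\mathcal N_\alpha(f)$ denotes the neighbourhood system of $f$ for $\sigma_\alpha$. A closure operator is determined by neighbourhood bases (families at each point that are nonempty, contain the point, and are downward directed) or subbases (nonempty families of sets containing the point, whose finite intersections form a base), via $u(A)=\{x:$ every basic neighbourhood of $x$ meets $A\}$. The infimum $\bigwedge\sigma_\alpha$ is the closure operator on $Y^X$ for which $\bigcap_\alpha\mathcal N_\alpha(f)$ is a neighbourhood base at each $f$; the supremum $\bigvee\sigma_\alpha$ is the closure operator for which $\bigcup_\alpha\mathcal N_\alpha(f)$ is a neighbourhood subbase at each $f$. A map $f:(X,u)\to(Y,v)$ is continuous if $f(u(A))\subset v(f(A))$ for all $A$. The product $(Z,w)\times(X,u)$ is $Z\times X$ with the closure operator for which the sets $W\times U$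 ($W$ a neighbourhood of $z$, $U$ of $x$) form a neighbourhood base at $(z,x)$. For $g:Z\times X\to Y$, $g^*(z)(x)=g(z,x)$. A closure operator $\sigma$ on $Y^X$ is proper if for every closure space $(Z,w)$, continuity of $g:(Z,w)\times(X,u)\to(Y,v)$ implies continuity of $g^*:(Z,w)\to(Y^X,\sigma)$; it is admissible if for every closure space $(Z,w)$ and every $g:Z\times X\to Y$ with $g^*(Z)\subset Y^X$, continuity of $g^*:(Z,w)\to(Y^X,\sigma)$ implies continuity of $g$. *)

theory Defs
  imports Main
begin

definition cech :: "('a set \<Rightarrow> 'a set) \<Rightarrow> bool" where
  "cech u \<longleftrightarrow> u {} = {} \<and> (\<forall>A. A \<subseteq> u A) \<and> (\<forall>A B. u (A \<union> B) = u A \<union> u B)"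

definition cech_on :: "'a set \<Rightarrow> ('a set \<Rightarrow> 'a set) \<Rightarrow> bool" where
  "cech_on C s \<longleftrightarrow> s {} = {} \<and> (\<forall>A. A \<subseteq> C \<longrightarrow> A \<subseteq> s A \<and> s A \<subseteq> C)
     \<and> (\<forall>A B. A \<subseteq> C \<longrightarrow> B \<subseteq> C \<longrightarrow> s (A \<union> B) = s A \<union> s B)"

definition cinterior :: "'a set \<Rightarrow> ('a set \<Rightarrow> 'a set) \<Rightarrow> 'a set \<Rightarrow> 'a set" where
  "cinterior C s A = C - s (C - A)"

definition cnhds :: "'a set \<Rightarrow> ('a set \<Rightarrow> 'a set) \<Rightarrow> 'a \<Rightarrow> 'a set set" where
  "cnhds C s x = {U. U \<subseteq> C \<and> x \<in> cinterior C s U}"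

definition closure_from_base :: "'a set \<Rightarrow> ('a \<Rightarrow> 'a set set) \<Rightarrow> 'a set \<Rightarrow> 'a set" where
  "closure_from_base C B A = {x \<in> C. \<forall>U \<in> B x. U \<inter> A \<noteq> {}}"

definition closure_from_subbase :: "'a set \<Rightarrow> ('a \<Rightarrow> 'a set set) \<Rightarrow> 'a set \<Rightarrow> 'a set" where
  "closure_from_subbase C S =
     closure_from_base C (\<lambda>x. {\<Inter>F | F. finite F \<and> F \<noteq> {} \<and> F \<subseteq> S x})"

definition cinf :: "'a set \<Rightarrow> 'i set \<Rightarrow> ('i \<Rightarrow> 'a set \<Rightarrow> 'a set) \<Rightarrow> 'a set \<Rightarrow> 'a set" where
  "cinf C I s = closure_from_base C (\<lambda>f. \<Inter>\<alpha>\<in>I. cnhds C (s \<alpha>) f)"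

definition csup :: "'a set \<Rightarrow> 'i set \<Rightarrow> ('i \<Rightarrow> 'a set \<Rightarrow> 'a set) \<Rightarrow> 'a set \<Rightarrow> 'a set" where
  "csup C I s = closure_from_subbase C (\<lambda>f. \<Union>\<alpha>\<in>I. cnhds C (s \<alpha>) f)"

definition ccont :: "('a set \<Rightarrow> 'a set) \<Rightarrow> ('b set \<Rightarrow> 'b set) \<Rightarrow> ('a \<Rightarrow> 'b) \<Rightarrow> bool" where
  "ccont u v f \<longleftrightarrow> (\<forall>A. f ` u A \<subseteq> v (f ` A))"

definition ccont_into :: "('a set \<Rightarrow> 'a set) \<Rightarrow> 'b set \<Rightarrow> ('b set \<Rightarrow> 'b set) \<Rightarrow> ('a \<Rightarrow> 'b) \<Rightarrow> bool" where
  "ccont_into w C s h \<longleftrightarrow> range h \<subseteq> C \<and> (\<forall>A. h ` w A \<subseteq> s (h ` A))"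

definition cnhd :: "('a set \<Rightarrow> 'a set) \<Rightarrow> 'a \<Rightarrow> 'a set \<Rightarrow> bool" where
  "cnhd u x U \<longleftrightarrow> x \<in> - u (- U)"

definition prod_closure ::
  "('z set \<Rightarrow> 'z set) \<Rightarrow> ('x set \<Rightarrow> 'x set) \<Rightarrow> ('z \<times> 'x) set \<Rightarrow> ('z \<times> 'x) set" where
  "prod_closure w u = closure_from_base UNIV
     (\<lambda>(z, x). {W \<times> U | W U. cnhd w z W \<and> cnhd u x U})"

definition cmaps :: "('x set \<Rightarrow> 'x set) \<Rightarrow> ('y set \<Rightarrow> 'y set) \<Rightarrow> ('x \<Rightarrow> 'y) set" where
  "cmaps u v = {f. ccont u v f}"

text \<open>Proper and admissible closure operators on Y^X; the test spaces (Z,w) range over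
  all closure spaces whose underlying set is the type 'z.\<close>
definition proper :: "'z itself \<Rightarrow> ('x set \<Rightarrow> 'x set) \<Rightarrow> ('y set \<Rightarrow> 'y set)
    \<Rightarrow> (('x \<Rightarrow> 'y) set \<Rightarrow> ('x \<Rightarrow> 'y) set) \<Rightarrow> bool" where
  "proper _ u v s \<longleftrightarrow> (\<forall>(w :: 'z set \<Rightarrow> 'z set) (g :: 'z \<times> 'x \<Rightarrow> 'y).
      cech w \<longrightarrow> ccont (prod_closure w u) v g \<longrightarrow> ccont_into w (cmaps u v) s (curry g))"

definition admissible :: "'z itself \<Rightarrow> ('x set \<Rightarrow> 'x set) \<Rightarrow> ('y set \<Rightarrow> 'y set)
    \<Rightarrow> (('x \<Rightarrow> 'y) set \<Rightarrow> ('x \<Rightarrow> 'y) set) \<Rightarrow> bool" where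
  "admissible _ u v s \<longleftrightarrow> (\<forall>(w :: 'z set \<Rightarrow> 'z set) (g :: 'z \<times> 'x \<Rightarrow> 'y).
      cech w \<longrightarrow> range (curry g) \<subseteq> cmaps u v \<longrightarrow> ccont_into w (cmaps u v) s (curry g)
        \<longrightarrow> ccont (prod_closure w u) v g)"

end

theory Submission
  imports Defs
begin

lemma cech_onD1: "cech_on C s \<Longrightarrow> A \<subseteq> C \<Longrightarrow> s A \<subseteq> C"
proof -
  assume h: "cech_on C s" "A \<subseteq> C"
  have "\<forall>A. A \<subseteq> C \<longrightarrow> A \<subseteq> s A \<and> s A \<subseteq> C" using h(1) unfolding cech_on_def by (elim conjE) assumption
  then have "A \<subseteq> s A \<and> s A \<subseteq> C" using h(2) by blast
  then show ?thesis by (rule conjunct2)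
qed

lemma cech_onD2: "cech_on C s \<Longrightarrow> A \<subseteq> C \<Longrightarrow> B \<subseteq> C \<Longrightarrow> s (A \<union> B) = s A \<union> s B"
proof -
  assume h: "cech_on C s" "A \<subseteq> C" "B \<subseteq> C"
  have "\<forall>A B. A \<subseteq> C \<longrightarrow> B \<subseteq> C \<longrightarrow> s (A \<union> B) = s A \<union> s B" using h(1) unfolding cech_on_def by (elim conjE) assumption
  then show ?thesis using h(2,3) by simp
qed

lemma cechD2: "cech w \<Longrightarrow> w (A \<union> B) = w A \<union> w B"
  unfolding cech_def by simp

lemma cechD0: "cech w \<Longrightarrow> w {} = {}"
  unfolding cech_def by (elim conjE) assumption

lemma mono_C: "cech_on C s \<Longrightarrow> A \<subseteq> B \<Longrightarrow> B \<subseteq> C \<Longrightarrow> s A \<subseteq> s B"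
proof -
  assume a: "cech_on C s" "A \<subseteq> B" "B \<subseteq> C"
  have "s (A \<union> B) = s A \<union> s B" using a by (intro cech_onD2) auto
  moreover have "A \<union> B = B" using a by blast
  ultimately show ?thesis by auto
qed

lemma mono_w: "cech w \<Longrightarrow> A \<subseteq> B \<Longrightarrow> w A \<subseteq> w B"
proof -
  assume a: "cech w" "A \<subseteq> B"
  have "w (A \<union> B) = w A \<union> w B" using a(1) by (rule cechD2)
  moreover have "A \<union> B = B" using a by blast
  ultimately show ?thesis by auto
qed

lemma inf_ge:
  assumes "\<alpha> \<in> I" "cech_on C (\<sigma> \<alpha>)" "A \<subseteq> C"
  shows "\<sigma> \<alpha> A \<subseteq> cinf C I \<sigma> A"
proof
  fix x assume x: "x \<in> \<sigma> \<alpha> A"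
  have xC: "x \<in> C" using cech_onD1[OF assms(2,3)] x by blast
  show "x \<in> cinf C I \<sigma> A"
    unfolding cinf_def closure_from_base_def
  proof (intro CollectI conjI ballI xC)
    fix U assume "U \<in> (\<Inter>\<alpha>\<in>I. cnhds C (\<sigma> \<alpha>) x)"
    then have U: "U \<in> cnhds C (\<sigma> \<alpha>) x" using assms by blast
    show "U \<inter> A \<noteq> {}"
    proof
      assume "U \<inter> A = {}"
      then have "A \<subseteq> C - U" using assms by blast
      then have "\<sigma> \<alpha> A \<subseteq> \<sigma> \<alpha> (C - U)" using mono_C[OF assms(2)] by blast
      then show False using U x unfolding cnhds_def cinterior_def by blast
    qed
  qed
qed

lemma sup_le:
  assumes "\<alpha> \<in> I" "cech_on C (\<sigma> \<alpha>)" "A \<subseteq> C"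
  shows "csup C I \<sigma> A \<subseteq> \<sigma> \<alpha> A"
proof
  fix x assume x: "x \<in> csup C I \<sigma> A"
  show "x \<in> \<sigma> \<alpha> A"
  proof (rule ccontr)
    assume nx: "x \<notin> \<sigma> \<alpha> A"
    have xC: "x \<in> C" using x unfolding csup_def closure_from_subbase_def closure_from_base_def by blast
    have "C - (C - A) = A" using assms by blast
    then have "C - A \<in> cnhds C (\<sigma> \<alpha>) x" using xC nx unfolding cnhds_def cinterior_def by auto
    then have "{C - A} \<subseteq> (\<Union>\<alpha>\<in>I. cnhds C (\<sigma> \<alpha>) x)" using assms by blast
    then have "\<Inter>{C - A} \<in> {\<Inter>F | F. finite F \<and> F \<noteq> {} \<and> F \<subseteq> (\<Union>\<alpha>\<in>I. cnhds C (\<sigma> \<alpha>) x)}"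
      by blast
    then have "C - A \<in> {\<Inter>F | F. finite F \<and> F \<noteq> {} \<and> F \<subseteq> (\<Union>\<alpha>\<in>I. cnhds C (\<sigma> \<alpha>) x)}"
      by simp
    moreover have "\<forall>U \<in> {\<Inter>F | F. finite F \<and> F \<noteq> {} \<and> F \<subseteq> (\<Union>\<alpha>\<in>I. cnhds C (\<sigma> \<alpha>) x)}. U \<inter> A \<noteq> {}"
      using x unfolding csup_def closure_from_subbase_def closure_from_base_def by blast
    ultimately have "(C - A) \<inter> A \<noteq> {}" by (rule bspec[rotated])
    then show False by blast
  qed
qed

lemma ccont_intoD: "ccont_into w C s h \<Longrightarrow> h ` w A \<subseteq> s (h ` A)"
  unfolding ccont_into_def by simp

lemma ccont_intoR: "ccont_into w C s h \<Longrightarrow> h x \<in> C"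
  unfolding ccont_into_def by auto

lemma cont_mono:
  assumes "ccont_into w C s h" "\<And>A. A \<subseteq> C \<Longrightarrow> s A \<subseteq> s' A"
  shows "ccont_into w C s' h"
proof -
  have r: "range h \<subseteq> C" using ccont_intoR[OF assms(1)] by auto
  have "h ` w A \<subseteq> s' (h ` A)" for A
  proof -
    have "h ` A \<subseteq> C" using r by auto
    then have "s (h ` A) \<subseteq> s' (h ` A)" by (rule assms(2))
    then show ?thesis using ccont_intoD[OF assms(1), of A] by (rule order_trans[rotated])
  qed
  then show ?thesis using r unfolding ccont_into_def by simp
qed

lemma cont_nbhd:
  assumes "cech_on C s" "ccont_into w C s h" "U \<in> cnhds C s (h z)"
  shows "z \<notin> w (- (h -` U))"
proof
  assume z: "z \<in> w (- (h -` U))"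
  have r: "\<And>x. h x \<in> C" using ccont_intoR[OF assms(2)] .
  have "h z \<in> h ` w (- (h -` U))" using z by (rule imageI)
  then have "h z \<in> s (h ` (- (h -` U)))" using ccont_intoD[OF assms(2)] by (rule subsetD[rotated])
  moreover have "h ` (- (h -` U)) \<subseteq> C - U" using r by auto
  ultimately have "h z \<in> s (C - U)" using mono_C[OF assms(1), of "h ` (- (h -` U))" "C - U"] by auto
  moreover have "h z \<in> C - s (C - U)" using assms(3) unfolding cnhds_def cinterior_def by simp
  ultimately show False by simp
qed

lemma finite_int:
  assumes "cech w" "finite F" "\<forall>U\<in>F. z \<notin> w (- U)"
  shows "z \<notin> w (- \<Inter>F)"
  using assms(2,3)
proof (induction F rule: finite_induct)
  case empty
  then show ?case using cechD0[OF assms(1)] by simp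
next
  case (insert U F)
  have "- \<Inter>(insert U F) = (- U) \<union> (- \<Inter>F)" by blast
  then show ?case using insert cechD2[OF assms(1)] by simp
qed

lemma sup_cont:
  assumes "cech w" "\<alpha>0 \<in> I" "\<forall>\<alpha>\<in>I. cech_on C (\<sigma> \<alpha>) \<and> ccont_into w C (\<sigma> \<alpha>) h"
  shows "ccont_into w C (csup C I \<sigma>) h"
proof -
  have r: "range h \<subseteq> C" using assms unfolding ccont_into_def by blast
  have "h z \<in> csup C I \<sigma> (h ` A)" if z: "z \<in> w A" for z A
    unfolding csup_def closure_from_subbase_def closure_from_base_def
  proof (intro CollectI conjI ballI)
    show "h z \<in> C" using r by blast
    fix V assume "V \<in> {\<Inter>F | F. finite F \<and> F \<noteq> {} \<and> F \<subseteq> (\<Union>\<alpha>\<in>I. cnhds C (\<sigma> \<alpha>) (h z))}"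
    then obtain F where F: "V = \<Inter>F" "finite F" "F \<subseteq> (\<Union>\<alpha>\<in>I. cnhds C (\<sigma> \<alpha>) (h z))" by blast
    have "\<forall>U\<in>(\<lambda>U. h -` U) ` F. z \<notin> w (- U)"
    proof
      fix U' assume "U' \<in> (\<lambda>U. h -` U) ` F"
      then obtain U where "U \<in> F" "U' = h -` U" by blast
      then obtain \<alpha> where "\<alpha> \<in> I" "U \<in> cnhds C (\<sigma> \<alpha>) (h z)" using F by blast
      moreover have "cech_on C (\<sigma> \<alpha>)" "ccont_into w C (\<sigma> \<alpha>) h" using assms(3) \<open>\<alpha> \<in> I\<close> by auto
      ultimately show "z \<notin> w (- U')" using cont_nbhd[of C "\<sigma> \<alpha>" w h U z] \<open>U' = h -` U\<close> by simp
    qed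
    then have "z \<notin> w (- \<Inter>((\<lambda>U. h -` U) ` F))" using finite_int[OF assms(1) finite_imageI[OF F(2)]] by blast
    moreover have "\<Inter>((\<lambda>U. h -` U) ` F) = h -` V" using F by auto
    ultimately have "z \<notin> w (- (h -` V))" by simp
    then have "\<not> A \<subseteq> - (h -` V)" using z mono_w[OF assms(1), of A "- (h -` V)"] by auto
    then show "V \<inter> h ` A \<noteq> {}" by blast
  qed
  then show ?thesis using r unfolding ccont_into_def by blast
qed

lemma properD:
  fixes w :: "'z set \<Rightarrow> 'z set" and g :: "'z \<times> 'x \<Rightarrow> 'y"
  assumes "proper TYPE('z) u v s" "cech w" "ccont (prod_closure w u) v g"
  shows "ccont_into w (cmaps u v) s (curry g)"
  using assms unfolding proper_def by simp

lemma admissibleD: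
  fixes w :: "'z set \<Rightarrow> 'z set" and g :: "'z \<times> 'x \<Rightarrow> 'y"
  assumes "admissible TYPE('z) u v s" "cech w" "range (curry g) \<subseteq> cmaps u v"
    "ccont_into w (cmaps u v) s (curry g)"
  shows "ccont (prod_closure w u) v g"
  using assms unfolding admissible_def by simp

theorem corollary2:
  fixes u :: "'x set \<Rightarrow> 'x set" and v :: "'y set \<Rightarrow> 'y set"
    and I :: "'i set" and \<sigma> :: "'i \<Rightarrow> ('x \<Rightarrow> 'y) set \<Rightarrow> ('x \<Rightarrow> 'y) set"
  assumes "cech u" and "cech v" and "I \<noteq> {}"
    and "\<forall>\<alpha>\<in>I. cech_on (cmaps u v) (\<sigma> \<alpha>)"
  shows "((\<forall>\<alpha>\<in>I. proper TYPE('z) u v (\<sigma> \<alpha>)) \<longrightarrow>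
            proper TYPE('z) u v (cinf (cmaps u v) I \<sigma>) \<and>
            proper TYPE('z) u v (csup (cmaps u v) I \<sigma>))
       \<and> ((\<forall>\<alpha>\<in>I. admissible TYPE('z) u v (\<sigma> \<alpha>)) \<longrightarrow>
            admissible TYPE('z) u v (csup (cmaps u v) I \<sigma>))"
proof -
  obtain \<alpha>0 where a0: "\<alpha>0 \<in> I" using assms(3) by blast
  let ?C = "cmaps u v"
  have P: "proper TYPE('z) u v (cinf ?C I \<sigma>) \<and> proper TYPE('z) u v (csup ?C I \<sigma>)"
    if pr: "\<forall>\<alpha>\<in>I. proper TYPE('z) u v (\<sigma> \<alpha>)"
  proof -
    have 1: "proper TYPE('z) u v (cinf ?C I \<sigma>)"
      unfolding proper_def
    proof (intro allI impI)
      fix w :: "'z set \<Rightarrow> 'z set" and g :: "'z \<times> 'x \<Rightarrow> 'y"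
      assume "cech w" "ccont (prod_closure w u) v g"
      then have "ccont_into w ?C (\<sigma> \<alpha>0) (curry g)" using pr a0 by (intro properD) simp_all
      then show "ccont_into w ?C (cinf ?C I \<sigma>) (curry g)"
        by (rule cont_mono) (rule inf_ge[OF a0], use assms(4) a0 in simp_all)
    qed
    have 2: "proper TYPE('z) u v (csup ?C I \<sigma>)"
      unfolding proper_def
    proof (intro allI impI)
      fix w :: "'z set \<Rightarrow> 'z set" and g :: "'z \<times> 'x \<Rightarrow> 'y"
      assume "cech w" "ccont (prod_closure w u) v g"
      then have "\<forall>\<alpha>\<in>I. ccont_into w ?C (\<sigma> \<alpha>) (curry g)" using pr by (auto intro: properD)
      then show "ccont_into w ?C (csup ?C I \<sigma>) (curry g)"
        by (intro sup_cont[OF \<open>cech w\<close> a0]) (use assms(4) in simp)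
    qed
    show ?thesis using 1 2 by blast
  qed
  have A: "admissible TYPE('z) u v (csup ?C I \<sigma>)"
    if ad: "\<forall>\<alpha>\<in>I. admissible TYPE('z) u v (\<sigma> \<alpha>)"
    unfolding admissible_def
  proof (intro allI impI)
    fix w :: "'z set \<Rightarrow> 'z set" and g :: "'z \<times> 'x \<Rightarrow> 'y"
    assume h: "cech w" "range (curry g) \<subseteq> ?C" "ccont_into w ?C (csup ?C I \<sigma>) (curry g)"
    have "ccont_into w ?C (\<sigma> \<alpha>0) (curry g)"
      by (rule cont_mono[OF h(3)]) (rule sup_le[OF a0], use assms(4) a0 in simp_all)
    then show "ccont (prod_closure w u) v g" using ad a0 h by (intro admissibleD) simp_all
  qed
  show ?thesis using P A by blast
qed

end
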